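(* Let $p\ge 1$, $m=2p$, $j=\mathrm{diag}(I_p,-I_p)$. Fix a function $\theta$ assigning to each $m\times m$ matrix $R$ with $R=R^*>0$, $RjR=j$ a nonzero complex number $\theta(R)$. (i) Let $\{R_k\}_{k\ge0}$ be $m\times m$ matrices with $R_k=R_k^*>0$ and $R_kjR_k=j$, put $\theta_k=\theta(R_k)$, $U_0=I_m$, $U_k=(ijR_0)(ijR_1)\cdots(ijR_{k-1})$ for $k>0$, and $C_k=(U_k^* )^{-1}R_k^2U_k^{-1}$. Then $C_k>0$, $C_k=C_k^*$ and $C_kjC_k=j$ for all $k$, and whenever $X_k(z)$ solves the block Szeg\"o recurrence $X_{k+1}(z)=\theta_kR_k\,\mathrm{diag}(zI_p,I_p)X_k(z)$, the function $$W_k(\lambda)=\frac{(i-\lambda^{-1})^k}{\prod_{r=0}^{k-1}\theta_r}\,U_k\,\mathrm{diag}(zI_p,I_p)\,X_k(z),\qquad z=\frac{1+i\lambda}{1-i\lambda},$$ solves the discrete Dirac system $W_{k+1}(\lambda)-W_k(\lambda)=-\frac{i}{\lambda}jC_kW_k(\lambda)$. (ii) Conversely, let $\{C_k\}_{k\ge0}$ be $m\times m$ matrices with $C_k>0$, $C_k=C_k^*$, $C_kjC_k=j$. Define recursively $U_0=I_m$, $R_k=(U_k^*C_kU_k)^{1/2}$ (positive square root), $U_{k+1}=U_k(ijR_k)$. Then $R_k=R_k^*>0$, $R_kjR_k=j$ and $C_k=(U_k^* )^{-1}R_k^2U_k^{-1}$ for all $k$. Consequently the maps in (i) and (ii) are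 mutually inverse, giving a one-to-one correspondence between such Dirac type systems (with $C_k>0$) and block Szeg\"o recurrences with $R_k>0$, $\theta_k=\theta(R_k)$.
   Context: $I_p$ denotes the $p\times p$ identity matrix. For a positive definite matrix, $(\cdot)^{1/2}$ is its positive definite square root. *)

theory Defs
  imports "HOL-Analysis.Analysis"
begin

text \<open>Square m x m complex matrices with m = 2p are indexed by the type 'p + 'p:
  indices Inl i form the first block of size p, indices Inr i the second one.\<close>

type_synonym 'p cmat = "complex ^ ('p + 'p) ^ ('p + 'p)"

definition cadj :: "complex ^ 'n ^ 'm \<Rightarrow> complex ^ 'm ^ 'n" where
  "cadj A = (\<chi> i j. cnj (A $ j $ i))"

definition hermitian :: "complex ^ 'n ^ 'n \<Rightarrow> bool" where
  "hermitian A \<longleftrightarrow> cadj A = A"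

definition posdef :: "complex ^ 'n ^ 'n \<Rightarrow> bool" where
  "posdef A \<longleftrightarrow> (\<forall>x::complex^'n. x \<noteq> 0 \<longrightarrow>
      (let q = (\<Sum>i\<in>UNIV. cnj (x $ i) * (A *v x) $ i) in q \<in> \<real> \<and> Re q > 0))"

definition psqrt :: "complex ^ 'n ^ 'n \<Rightarrow> complex ^ 'n ^ 'n" where
  "psqrt A = (THE S. hermitian S \<and> posdef S \<and> S ** S = A)"

definition bdiag :: "complex \<Rightarrow> complex \<Rightarrow> ('p::finite) cmat" where
  "bdiag a b = (\<chi> i k. if i = k then (case i of Inl _ \<Rightarrow> a | Inr _ \<Rightarrow> b) else 0)"

definition jmat :: "('p::finite) cmat" where
  "jmat = bdiag 1 (-1)"

definition jadm :: "('p::finite) cmat \<Rightarrow> bool" where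
  "jadm R \<longleftrightarrow> hermitian R \<and> posdef R \<and> R ** jmat ** R = jmat"

primrec szegoU :: "(nat \<Rightarrow> ('p::finite) cmat) \<Rightarrow> nat \<Rightarrow> ('p::finite) cmat" where
  "szegoU R 0 = mat 1"
| "szegoU R (Suc k) = szegoU R k ** (mat \<i> ** jmat ** R k)"

primrec diracU :: "(nat \<Rightarrow> ('p::finite) cmat) \<Rightarrow> nat \<Rightarrow> ('p::finite) cmat" where
  "diracU C 0 = mat 1"
| "diracU C (Suc k) = diracU C k **
     (mat \<i> ** jmat ** psqrt (cadj (diracU C k) ** C k ** diracU C k))"

definition diracR :: "(nat \<Rightarrow> ('p::finite) cmat) \<Rightarrow> nat \<Rightarrow> ('p::finite) cmat" where
  "diracR C k = psqrt (cadj (diracU C k) ** C k ** diracU C k)"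

end

theory Submission
  imports Defs
begin


definition cdot :: "complex^'n \<Rightarrow> complex^'n \<Rightarrow> complex" where
  "cdot x y = (\<Sum>i\<in>UNIV. cnj (x $ i) * y $ i)"

lemma cadj_cadj[simp]: "cadj (cadj A) = A"
  by (simp add: cadj_def vec_eq_iff)

lemma cadj_mult: "cadj (A ** B) = cadj B ** cadj A"
  by (simp add: cadj_def matrix_matrix_mult_def vec_eq_iff mult.commute)

lemma cadj_mat[simp]: "cadj (mat c) = mat (cnj c)"
  by (simp add: cadj_def mat_def vec_eq_iff)

lemma cadj_add: "cadj (A + B) = cadj A + cadj B"
  by (simp add: cadj_def vec_eq_iff)

lemma cadj_diff: "cadj (A - B) = cadj A - cadj B"
  by (simp add: cadj_def vec_eq_iff)

lemma cadj_scaleR: "cadj (c *\<^sub>R A) = c *\<^sub>R cadj A"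
  by (simp add: cadj_def vec_eq_iff)

lemma cdot_adj: "cdot x (A *v y) = cdot (cadj A *v x) y"
  unfolding cdot_def cadj_def matrix_vector_mult_def
  apply (simp add: sum_distrib_left sum_distrib_right)
  apply (subst sum.swap)
  apply (simp add: mult_ac)
  done

lemma inner_cdot: "inner x y = Re (cdot x y)"
  by (simp add: cdot_def inner_vec_def inner_complex_def Re_sum)

definition diagm :: "('n \<Rightarrow> complex) \<Rightarrow> complex^'n^'n" where
  "diagm f = (\<chi> i k. if i = k then f i else 0)"

definition bsel :: "complex \<Rightarrow> complex \<Rightarrow> 'p + 'p \<Rightarrow> complex" where
  "bsel a b i = (case i of Inl _ \<Rightarrow> a | Inr _ \<Rightarrow> b)"

lemma bdiag_diagm: "bdiag a b = diagm (bsel a b)"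
  unfolding bdiag_def diagm_def bsel_def by simp

lemma diagm_mult: "diagm f ** diagm g = diagm (\<lambda>i. f i * g i)"
proof -
  have "(diagm f ** diagm g) $ i $ k = diagm (\<lambda>i. f i * g i) $ i $ k" for i k
  proof -
    have "(diagm f ** diagm g) $ i $ k = (\<Sum>l\<in>UNIV. (if i = l then f i else 0) * (if l = k then g l else 0))"
      by (simp add: matrix_matrix_mult_def diagm_def)
    also have "\<dots> = (\<Sum>l\<in>UNIV. if l = i then (if i = k then f i * g i else 0) else 0)"
      by (rule sum.cong) auto
    also have "\<dots> = diagm (\<lambda>i. f i * g i) $ i $ k"
      by (simp add: diagm_def)
    finally show ?thesis .
  qed
  then show ?thesis by (simp add: vec_eq_iff)
qed

lemma bsel_mult: "(\<lambda>i. bsel a b i * bsel c d i) = bsel (a*c) (b*d)"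
  by (auto simp: bsel_def fun_eq_iff split: sum.split)

lemma bdiag_mult: "bdiag a b ** bdiag c d = bdiag (a*c) (b*d)"
  by (simp add: bdiag_diagm diagm_mult bsel_mult)

lemma bdiag_add: "bdiag a b + bdiag c d = bdiag (a+c) (b+d)"
  by (auto simp: bdiag_def vec_eq_iff split: sum.split)

lemma mat_bdiag: "mat c = bdiag c c"
  by (auto simp: bdiag_def mat_def vec_eq_iff split: sum.split)

lemma cadj_bdiag: "cadj (bdiag a b) = bdiag (cnj a) (cnj b)"
  by (auto simp: bdiag_def cadj_def vec_eq_iff split: sum.split)

lemma jj: "jmat ** jmat = mat 1"
  by (simp add: jmat_def bdiag_mult mat_bdiag)

lemma cadj_j[simp]: "cadj jmat = jmat"
  by (simp add: jmat_def cadj_bdiag)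

lemma mat_right_entry: "((A::complex^'n^'m) ** mat c) $ i $ k = A$i$k * c"
proof -
  have "(A ** mat c) $ i $ k = (\<Sum>l\<in>UNIV. A$i$l * (if l = k then c else 0))"
    by (simp add: matrix_matrix_mult_def mat_def)
  also have "\<dots> = (\<Sum>l\<in>UNIV. if l = k then A$i$l * c else 0)"
    by (rule sum.cong) auto
  finally show ?thesis by simp
qed

lemma mat_left_entry: "(mat c ** (A::complex^'n^'m)) $ i $ k = c * A$i$k"
proof -
  have "(mat c ** A) $ i $ k = (\<Sum>l\<in>UNIV. (if i = l then c else 0) * A$l$k)"
    by (simp add: matrix_matrix_mult_def mat_def)
  also have "\<dots> = (\<Sum>l\<in>UNIV. if l = i then c * A$l$k else 0)"
    by (rule sum.cong) auto
  finally show ?thesis by simp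
qed

lemma mat_comm: "(A::complex^'n^'m) ** mat c = mat c ** A"
  by (simp add: vec_eq_iff mat_right_entry mat_left_entry mult.commute)

lemma mat_left: "(A::complex^'n^'m) ** (mat c ** B) = mat c ** (A ** B)"
  by (metis matrix_mul_assoc mat_comm)

lemma mat_mat: "mat a ** (mat b ** (B::complex^'n^'m)) = mat (a*b) ** B"
  by (simp add: vec_eq_iff mat_left_entry mult.assoc)

lemma mat_add_r: "mat a ** (B::complex^'n^'m) + mat b ** B = mat (a+b) ** B"
  by (simp add: vec_eq_iff mat_left_entry algebra_simps)

lemma mat_add: "(mat a + mat b :: complex^'n^'n) = mat (a+b)"
  by (auto simp: mat_def vec_eq_iff)



lemma minv_works:
  assumes "invertible (A::complex^'n^'n)"
  shows "A ** matrix_inv A = mat 1" "matrix_inv A ** A = mat 1"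
proof -
  from assms obtain A' where "A ** A' = mat 1 \<and> A' ** A = mat 1" unfolding invertible_def by blast
  then have "A ** matrix_inv A = mat 1 \<and> matrix_inv A ** A = mat 1"
    unfolding matrix_inv_def by (rule someI)
  then show "A ** matrix_inv A = mat 1" "matrix_inv A ** A = mat 1" by auto
qed

lemma minv_unique:
  assumes "(B::complex^'n^'n) ** A = mat 1"
  shows "matrix_inv A = B"
proof -
  have inv: "invertible A" using assms invertible_left_inverse by blast
  have AB: "A ** B = mat 1" using assms matrix_left_right_inverse by blast
  have "matrix_inv A = (B ** A) ** matrix_inv A" using assms by simp
  also have "\<dots> = B" by (metis AB inv matrix_mul_assoc matrix_mul_rid minv_works(1))
  finally show ?thesis .
qed

lemma invertible_cadj:
  assumes "invertible (A::complex^'n^'n)"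
  shows "invertible (cadj A)" "matrix_inv (cadj A) = cadj (matrix_inv A)"
proof -
  have "cadj (matrix_inv A) ** cadj A = mat 1"
    using minv_works(1)[OF assms] by (metis cadj_mult cadj_mat complex_cnj_one)
  then show "invertible (cadj A)" "matrix_inv (cadj A) = cadj (matrix_inv A)"
    using invertible_left_inverse minv_unique by blast+
qed

lemma cnj_cdot: "cnj (cdot x y) = cdot y x"
  by (simp add: cdot_def mult.commute)

lemma cdot_self_norm: "cdot x x = complex_of_real ((norm x)^2)"
proof -
  have "cnj (cdot x x) = cdot x x" by (simp add: cnj_cdot)
  then have "cdot x x \<in> \<real>" using Reals_cnj_iff by blast
  moreover have "Re (cdot x x) = (norm x)^2"
    by (simp add: inner_cdot[symmetric] power2_norm_eq_inner)
  ultimately show ?thesis by (metis Reals_cases Re_complex_of_real)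
qed

lemma cdot_zero_right[simp]: "cdot x 0 = 0"
  by (simp add: cdot_def)

lemma hermitian_cdot_real:
  assumes "hermitian H"
  shows "cdot x (H *v x) \<in> \<real>"
proof -
  have "cdot x (H *v x) = cdot (H *v x) x"
    using cdot_adj[of x H x] assms by (simp add: hermitian_def)
  then have "cnj (cdot x (H *v x)) = cdot x (H *v x)" by (simp add: cnj_cdot)
  then show ?thesis using Reals_cnj_iff by blast
qed

lemma posdefD:
  assumes "posdef A" "x \<noteq> 0"
  shows "cdot x (A *v x) \<in> \<real>" "Re (cdot x (A *v x)) > 0"
  using assms unfolding posdef_def cdot_def Let_def by auto

lemma posdefI:
  assumes "\<And>x. x \<noteq> 0 \<Longrightarrow> cdot x (A *v x) \<in> \<real> \<and> Re (cdot x (A *v x)) > 0"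
  shows "posdef A"
  using assms unfolding posdef_def cdot_def Let_def by auto

lemma posdef_inj:
  assumes "posdef A" "A *v x = 0"
  shows "x = 0"
proof (rule ccontr)
  assume "x \<noteq> 0"
  from posdefD(2)[OF assms(1) this] assms(2) show False by simp
qed

lemma posdef_invertible:
  assumes "posdef (A::complex^'n^'n)"
  shows "invertible A"
  using posdef_inj[OF assms] matrix_left_invertible_ker invertible_left_inverse by blast

lemma invertible_inj:
  assumes "invertible (V::complex^'n^'n)" "V *v x = 0"
  shows "x = 0"
  using assms by (metis matrix_vector_mul_assoc matrix_vector_mul_lid matrix_vector_mult_0_right minv_works(2))

lemma posdef_congr:
  assumes "posdef A" "invertible (V::complex^'n^'n)"
  shows "posdef (cadj V ** A ** V)"
proof (rule posdefI)
  fix x :: "complex^'n" assume x: "x \<noteq> 0"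
  have Vx: "V *v x \<noteq> 0" using invertible_inj[OF assms(2)] x by blast
  have "cdot x ((cadj V ** A ** V) *v x) = cdot (V *v x) (A *v (V *v x))"
    by (simp add: matrix_vector_mul_assoc[symmetric] cdot_adj)
  then show "cdot x ((cadj V ** A ** V) *v x) \<in> \<real> \<and> Re (cdot x ((cadj V ** A ** V) *v x)) > 0"
    using posdefD[OF assms(1) Vx] by simp
qed

lemma hermitian_congr:
  assumes "hermitian A"
  shows "hermitian (cadj V ** A ** V)"
  using assms by (simp add: hermitian_def cadj_mult matrix_mul_assoc)

lemma posdef_one: "posdef (mat 1)"
proof (rule posdefI)
  fix x :: "complex^'n" assume "x \<noteq> 0"
  then show "cdot x (mat 1 *v x) \<in> \<real> \<and> Re (cdot x (mat 1 *v x)) > 0"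
    by (simp add: cdot_self_norm)
qed

lemma posdef_square:
  assumes "hermitian S" "posdef (S::complex^'n^'n)"
  shows "posdef (S ** S)" "hermitian (S ** S)"
proof -
  have "S ** S = cadj S ** mat 1 ** S" using assms(1) by (simp add: hermitian_def)
  then show "posdef (S ** S)"
    using posdef_congr[OF posdef_one posdef_invertible[OF assms(2)]] by simp
  show "hermitian (S ** S)" using assms(1) by (simp add: hermitian_def cadj_mult)
qed



lemma matrix_diff_ldistrib: "(A::complex^'n^'m) ** (B - C) = A ** B - A ** C"
  by (simp add: matrix_matrix_mult_def vec_eq_iff sum_subtractf algebra_simps)

lemma matrix_diff_rdistrib: "((A::complex^'n^'m) - B) ** C = A ** C - B ** C"
  by (simp add: matrix_matrix_mult_def vec_eq_iff sum_subtractf algebra_simps)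

lemma matrix_neg_right: "(A::complex^'n^'m) ** (- B) = - (A ** B)"
  by (simp add: matrix_matrix_mult_def vec_eq_iff sum_negf)

lemma trace_neg: "trace (- (A::complex^'n^'n)) = - trace A"
  by (simp add: trace_def sum_negf)

lemma diag_entry_form:
  assumes "hermitian (D::complex^'n^'n)"
  shows "(D ** P ** D) $ i $ i = cdot (column i D) (P *v column i D)"
proof -
  have h: "D $ a $ i = cnj (D $ i $ a)" for a
    using assms unfolding hermitian_def cadj_def by (metis vec_lambda_beta)
  have "(D ** P ** D) $ i $ i = (\<Sum>b\<in>UNIV. (\<Sum>a\<in>UNIV. D$i$a * P$a$b) * D$b$i)"
    by (simp add: matrix_matrix_mult_def)
  also have "\<dots> = (\<Sum>b\<in>UNIV. \<Sum>a\<in>UNIV. D$i$a * P$a$b * D$b$i)"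
    by (simp add: sum_distrib_right)
  also have "\<dots> = (\<Sum>a\<in>UNIV. \<Sum>b\<in>UNIV. D$i$a * P$a$b * D$b$i)"
    by (rule sum.swap)
  also have "\<dots> = cdot (column i D) (P *v column i D)"
    by (simp add: cdot_def column_def matrix_vector_mult_def sum_distrib_left h mult.assoc)
  finally show ?thesis .
qed

lemma posdef_form_nonneg:
  assumes "posdef A"
  shows "Re (cdot x (A *v x)) \<ge> 0"
  using posdefD(2)[OF assms, of x] by (cases "x = 0") auto

lemma psqrt_unique:
  assumes hS: "hermitian (S::complex^'n^'n)" and pS: "posdef S"
    and hT: "hermitian T" and pT: "posdef T" and sq: "S ** S = T ** T"
  shows "S = T"
proof -
  define D where "D = S - T"
  have hD: "hermitian D" using hS hT by (simp add: D_def hermitian_def cadj_diff)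
  have SD: "S ** D = - (D ** T)"
    unfolding D_def using sq by (simp add: matrix_diff_ldistrib matrix_diff_rdistrib matrix_mul_assoc)
  have "trace (D ** S ** D) = trace (D ** (S ** D))" by (simp add: matrix_mul_assoc)
  also have "\<dots> = - trace (D ** (D ** T))" by (simp add: SD matrix_neg_right trace_neg)
  also have "\<dots> = - trace ((D ** T) ** D)" using trace_mul_sym[of D "D ** T"] by simp
  finally have tr: "trace (D ** S ** D) + trace (D ** T ** D) = 0" by simp
  define g where "g P i = Re (cdot (column i D) (P *v column i D))" for P i
  have "Re (trace (D ** S ** D) + trace (D ** T ** D)) = (\<Sum>i\<in>UNIV. g S i + g T i)"
    by (simp add: trace_def diag_entry_form[OF hD] g_def Re_sum sum.distrib)
  with tr have sum0: "(\<Sum>i\<in>UNIV. g S i + g T i) = 0" by simp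
  have nn: "\<And>i. g S i + g T i \<ge> 0"
    unfolding g_def using posdef_form_nonneg[OF pS] posdef_form_nonneg[OF pT] by (simp add: add_nonneg_nonneg)
  have z: "g S i + g T i = 0" for i
    using sum_nonneg_eq_0_iff[of UNIV "\<lambda>i. g S i + g T i"] sum0 nn by simp
  have "column i D = 0" for i
  proof (rule ccontr)
    assume "column i D \<noteq> 0"
    then have "g S i > 0" "g T i > 0" unfolding g_def using posdefD(2) pS pT by auto
    with z[of i] show False by simp
  qed
  then have "D = 0" by (simp add: vec_eq_iff column_def) 
  then show ?thesis by (simp add: D_def)
qed



lemma scaleR_mv: "(c *\<^sub>R (A::complex^'n^'m)) *v x = c *\<^sub>R (A *v x)"
  by (simp add: matrix_vector_mult_def vec_eq_iff scaleR_sum_right)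

lemma mv_scaleR: "(A::complex^'n^'m) *v (c *\<^sub>R x) = c *\<^sub>R (A *v x)"
  by (simp add: matrix_vector_mult_def vec_eq_iff scaleR_sum_right)

lemma coercive:
  assumes "posdef (A::complex^'n^'n)"
  shows "\<exists>\<alpha>>0. \<forall>x. inner x (A *v x) \<ge> \<alpha> * (norm x)^2"
proof -
  let ?f = "\<lambda>x::complex^'n. inner x (A *v x)"
  have cont: "continuous_on (sphere 0 1) ?f"
    by (intro continuous_intros linear_continuous_on matrix_vector_mul_bounded_linear)
  have ne: "sphere (0::complex^'n) 1 \<noteq> {}" by simp
  obtain x0 where x0: "x0 \<in> sphere 0 1" "\<forall>y\<in>sphere 0 1. ?f x0 \<le> ?f y"
    using continuous_attains_inf[OF compact_sphere ne cont] by blast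
  have "x0 \<noteq> 0" using x0(1) by auto
  then have pos: "?f x0 > 0" using posdefD(2)[OF assms] by (simp add: inner_cdot)
  have "?f x \<ge> ?f x0 * (norm x)^2" for x
  proof (cases "x = 0")
    case True then show ?thesis by simp
  next
    case False
    define u where "u = (1 / norm x) *\<^sub>R x"
    have u: "u \<in> sphere 0 1" using False by (simp add: u_def)
    have xu: "x = norm x *\<^sub>R u" using False by (simp add: u_def)
    have "?f x = (norm x)^2 * ?f u"
      by (subst (1 2) xu) (simp add: mv_scaleR power2_eq_square)
    then show ?thesis using x0(2) u False
      by (simp add: mult.commute mult_left_mono)
  qed
  then show ?thesis using pos by blast
qed

definition vcnj :: "complex^'n \<Rightarrow> complex^'n" where
  "vcnj v = (\<chi> i. cnj (v $ i))"

lemma norm_vcnj[simp]: "norm (vcnj v) = norm v"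
  by (simp add: vcnj_def norm_vec_def)

lemma vm_hermitian:
  assumes "hermitian (Z::complex^'n^'n)"
  shows "v v* Z = vcnj (Z *v vcnj v)"
proof -
  have "v v* Z = v v* (cadj Z)" using assms by (simp add: hermitian_def)
  also have "\<dots> = vcnj (Z *v vcnj v)"
    by (simp add: cadj_def vector_matrix_mult_def matrix_vector_mult_def vcnj_def vec_eq_iff mult.commute)
  finally show ?thesis .
qed

lemma norm_sq_rows: "(norm (A::complex^'n^'m))^2 = (\<Sum>i\<in>UNIV. (norm (A $ i))^2)"
  by (simp add: norm_vec_def L2_set_def sum_nonneg)

lemma norm_sq_entries: "(norm (A::complex^'n^'m))^2 = (\<Sum>i\<in>UNIV. \<Sum>j\<in>UNIV. (norm (A $ i $ j))^2)"
  by (simp add: norm_sq_rows) (simp add: norm_vec_def L2_set_def sum_nonneg)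

lemma norm_sq_cols: "(norm (A::complex^'n^'m))^2 = (\<Sum>j\<in>UNIV. (norm (column j A))^2)"
proof -
  have "(\<Sum>j\<in>UNIV. (norm (column j A))^2) = (\<Sum>j\<in>UNIV. \<Sum>i\<in>UNIV. (norm (A $ i $ j))^2)"
    by (simp add: norm_vec_def L2_set_def sum_nonneg column_def)
  also have "\<dots> = (\<Sum>i\<in>UNIV. \<Sum>j\<in>UNIV. (norm (A $ i $ j))^2)" by (rule sum.swap)
  finally show ?thesis by (simp add: norm_sq_entries)
qed

lemma column_mult: "column j ((Y::complex^'n^'m) ** D) = Y *v column j D"
  by (simp add: column_def matrix_matrix_mult_def matrix_vector_mult_def vec_eq_iff)

lemma row_mult: "((D::complex^'n^'m) ** Z) $ i = (D $ i) v* Z"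
  by (simp add: matrix_matrix_mult_def vector_matrix_mult_def vec_eq_iff)

lemma sq_bound_imp:
  assumes "(a::real)^2 \<le> (r * b)^2" "0 \<le> r" "0 \<le> b" "0 \<le> a"
  shows "a \<le> r * b"
  using assms by (meson mult_nonneg_nonneg power2_le_imp_le)

lemma frob_left:
  assumes Y: "\<forall>x. norm ((Y::complex^'n^'n) *v x) \<le> \<rho> * norm x" and r: "0 \<le> \<rho>"
  shows "norm (Y ** D) \<le> \<rho> * norm (D::complex^'k^'n)"
proof (rule sq_bound_imp[OF _ r])
  have "(norm (Y ** D))^2 = (\<Sum>j\<in>UNIV. (norm (Y *v column j D))^2)"
    by (simp add: norm_sq_cols column_mult)
  also have "\<dots> \<le> (\<Sum>j\<in>UNIV. (\<rho> * norm (column j D))^2)"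
    by (intro sum_mono power_mono) (auto simp: Y)
  also have "\<dots> = (\<rho> * norm D)^2"
    by (simp add: norm_sq_cols[of D] power_mult_distrib sum_distrib_left)
  finally show "(norm (Y ** D))^2 \<le> (\<rho> * norm D)^2" .
qed auto

lemma frob_right:
  assumes Z: "\<forall>x. norm ((Z::complex^'n^'n) *v x) \<le> \<rho> * norm x" and r: "0 \<le> \<rho>"
    and h: "hermitian Z"
  shows "norm (D ** Z) \<le> \<rho> * norm (D::complex^'n^'k)"
proof (rule sq_bound_imp[OF _ r])
  have "(norm (D ** Z))^2 = (\<Sum>i\<in>UNIV. (norm (Z *v vcnj (D $ i)))^2)"
    by (simp add: norm_sq_rows row_mult vm_hermitian[OF h])
  also have "\<dots> \<le> (\<Sum>i\<in>UNIV. (\<rho> * norm (D $ i))^2)"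
    by (intro sum_mono power_mono) (metis Z norm_vcnj, simp)
  also have "\<dots> = (\<rho> * norm D)^2"
    by (simp add: norm_sq_rows[of D] power_mult_distrib sum_distrib_left)
  finally show "(norm (D ** Z))^2 \<le> (\<rho> * norm D)^2" .
qed auto

lemma cont_cadj: "continuous_on UNIV (cadj :: complex^'n^'m \<Rightarrow> complex^'m^'n)"
  unfolding cadj_def by (intro continuous_intros)

lemma cont_mv: "continuous_on UNIV (\<lambda>Y::complex^'n^'m. Y *v x)"
  unfolding matrix_vector_mult_def by (intro continuous_intros)



lemma cadj_zero[simp]: "cadj 0 = 0"
  by (simp add: cadj_def vec_eq_iff)

lemma hermitian_one: "hermitian (mat 1)"
  by (simp add: hermitian_def)

lemma contraction_setup:
  assumes hA: "hermitian A" and pA: "posdef (A::complex^'n^'n)"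
  obtains c r where "c > 0" "0 \<le> r" "r < 1" "hermitian (mat 1 - c *\<^sub>R A)"
    "\<forall>x. norm ((mat 1 - c *\<^sub>R A) *v x) \<le> r * norm x"
proof -
  obtain \<alpha> where a: "\<alpha> > 0" "\<forall>x. inner x (A *v x) \<ge> \<alpha> * (norm x)^2"
    using coercive[OF pA] by blast
  obtain \<beta>0 where b0: "\<beta>0 > 0" "\<forall>x. norm (A *v x) \<le> norm x * \<beta>0"
    using bounded_linear.pos_bounded[OF matrix_vector_mul_bounded_linear[of A]] by blast
  define \<beta> where "\<beta> = max \<beta>0 \<alpha>"
  have b: "\<beta> > 0" "\<alpha> \<le> \<beta>" "\<forall>x. norm (A *v x) \<le> \<beta> * norm x"
    unfolding \<beta>_def using b0 a(1)
    by (auto simp: mult.commute intro: order_trans[OF _ mult_left_mono[OF max.cobounded1]])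
  define c where "c = \<alpha> / \<beta>^2"
  define q where "q = 1 - \<alpha>^2 / \<beta>^2"
  define r where "r = sqrt q"
  have c: "c > 0" using a b by (simp add: c_def)
  have q: "0 \<le> q" "q < 1" using a b by (auto simp: q_def power_mono field_simps)
  let ?M = "mat 1 - c *\<^sub>R A"
  have hM: "hermitian ?M" using hA by (simp add: hermitian_def cadj_diff cadj_scaleR)
  have bound: "norm (?M *v x) \<le> r * norm x" for x
  proof -
    have Mx: "?M *v x = x - c *\<^sub>R (A *v x)" by (simp add: matrix_vector_mult_diff_rdistrib scaleR_mv)
    have e: "(norm (?M *v x))^2 = (norm x)^2 - 2 * c * inner x (A *v x) + c^2 * (norm (A *v x))^2"
      unfolding Mx power2_norm_eq_inner
      by (simp add: inner_diff_left inner_diff_right inner_commute[of "A *v x" x] power2_eq_square algebra_simps)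
    have "c^2 * (norm (A *v x))^2 \<le> c^2 * (\<beta> * norm x)^2"
      using b(3) by (intro mult_left_mono power_mono) auto
    moreover have "2 * c * inner x (A *v x) \<ge> 2 * c * (\<alpha> * (norm x)^2)"
      using a(2) c by (intro mult_left_mono) auto
    ultimately have "(norm (?M *v x))^2 \<le> (norm x)^2 - 2 * c * (\<alpha> * (norm x)^2) + c^2 * (\<beta> * norm x)^2"
      using e by linarith
    also have "\<dots> = q * (norm x)^2"
      using b(1) by (simp add: c_def q_def power2_eq_square field_simps)
    finally have "(norm (?M *v x))^2 \<le> (r * norm x)^2"
      using q by (simp add: r_def power_mult_distrib)
    then show ?thesis using q by (intro sq_bound_imp) (auto simp: r_def)
  qed
  have "0 \<le> r" "r < 1" using q by (auto simp: r_def)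
  then show ?thesis using that c hM bound by blast
qed



lemma sqrt_exists:
  assumes hA: "hermitian A" and pA: "posdef (A::complex^'n^'n)"
  shows "\<exists>S. hermitian S \<and> posdef S \<and> S ** S = A"
proof -
  obtain c r where c: "c > 0" and r: "0 \<le> r" "r < 1" and hM: "hermitian (mat 1 - c *\<^sub>R A)"
    and bM: "\<forall>x. norm ((mat 1 - c *\<^sub>R A) *v x) \<le> r * norm x"
    using contraction_setup[OF hA pA] by blast
  define M where "M = mat 1 - c *\<^sub>R A"
  define \<rho> where "\<rho> = 1 - sqrt (1 - r)"
  have \<rho>: "0 \<le> \<rho>" "\<rho> < 1" using r by (auto simp: \<rho>_def)
  have \<rho>eq: "r + \<rho> * \<rho> = 2 * \<rho>"
  proof -
    have "sqrt (1 - r) * sqrt (1 - r) = 1 - r" using r by simp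
    then show ?thesis unfolding \<rho>_def by (simp add: algebra_simps)
  qed
  define K where "K = {Y::complex^'n^'n. hermitian Y \<and> (\<forall>x. norm (Y *v x) \<le> \<rho> * norm x)}"
  define F where "F Y = (1/2::real) *\<^sub>R (M + Y ** Y)" for Y :: "complex^'n^'n"
  have Keq: "K = {Y. cadj Y = Y} \<inter> (\<Inter>x. {Y. norm (Y *v x) \<le> \<rho> * norm x})"
    by (auto simp: K_def hermitian_def)
  have "closed K" unfolding Keq
    by (intro closed_Int closed_INT ballI closed_Collect_eq closed_Collect_le cont_cadj continuous_on_id
        continuous_on_norm cont_mv continuous_on_const)
  then have cK: "complete K" by (simp add: complete_eq_closed)
  have neK: "K \<noteq> {}"
  proof -
    have "0 \<in> K" using \<rho> by (simp add: K_def hermitian_def)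
    then show ?thesis by blast
  qed
  have FK: "F ` K \<subseteq> K"
  proof
    fix Z assume "Z \<in> F ` K"
    then obtain Y where Y: "Y \<in> K" "Z = F Y" by blast
    have hY: "hermitian Y" and bY: "\<And>x. norm (Y *v x) \<le> \<rho> * norm x" using Y(1) by (auto simp: K_def)
    have "hermitian Z" using hY hM
      by (simp add: Y(2) F_def M_def[symmetric] hermitian_def cadj_scaleR cadj_add cadj_mult)
    moreover have "norm (Z *v x) \<le> \<rho> * norm x" for x
    proof -
      have "Z *v x = (1/2::real) *\<^sub>R (M *v x + Y *v (Y *v x))"
        by (simp add: Y(2) F_def scaleR_mv matrix_vector_mult_add_rdistrib matrix_vector_mul_assoc)
      then have "norm (Z *v x) \<le> (1/2) * (norm (M *v x) + norm (Y *v (Y *v x)))"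
        by (simp add: norm_triangle_ineq)
      also have "\<dots> \<le> (1/2) * (r * norm x + \<rho> * (\<rho> * norm x))"
        using bM bY[of x] bY[of "Y *v x"] \<rho>(1) unfolding M_def
        by (intro mult_left_mono add_mono order_trans[OF bY mult_left_mono]) auto
      also have "\<dots> = (1/2) * ((r + \<rho> * \<rho>) * norm x)" by (simp add: algebra_simps)
      also have "\<dots> = \<rho> * norm x" using \<rho>eq by simp
      finally show ?thesis .
    qed
    ultimately show "Z \<in> K" by (simp add: K_def)
  qed
  have lip: "dist (F Y) (F Z) \<le> \<rho> * dist Y Z" if "Y \<in> K" "Z \<in> K" for Y Z
  proof -
    have hZ: "hermitian Z" and bY: "\<forall>x. norm (Y *v x) \<le> \<rho> * norm x"
      and bZ: "\<forall>x. norm (Z *v x) \<le> \<rho> * norm x" using that by (auto simp: K_def)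
    have "F Y - F Z = (1/2::real) *\<^sub>R (Y ** (Y - Z) + (Y - Z) ** Z)"
      by (simp add: F_def matrix_diff_ldistrib matrix_diff_rdistrib scaleR_diff_right[symmetric])
    then have "dist (F Y) (F Z) = (1/2) * norm (Y ** (Y - Z) + (Y - Z) ** Z)"
      by (simp add: dist_norm)
    also have "\<dots> \<le> (1/2) * (\<rho> * norm (Y - Z) + \<rho> * norm (Y - Z))"
      by (intro mult_left_mono order_trans[OF norm_triangle_ineq] add_mono
          frob_left[OF bY \<rho>(1)] frob_right[OF bZ \<rho>(1) hZ]) auto
    also have "\<dots> = \<rho> * dist Y Z" by (simp add: dist_norm)
    finally show ?thesis .
  qed
  obtain Y where Y: "Y \<in> K" "F Y = Y"
    using Banach_fix[OF cK neK \<rho> FK lip] by blast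
  have hY: "hermitian Y" and bY: "\<And>x. norm (Y *v x) \<le> \<rho> * norm x" using Y(1) by (auto simp: K_def)
  have MY: "M + Y ** Y = 2 *\<^sub>R Y"
  proof -
    have "2 *\<^sub>R F Y = M + Y ** Y" by (simp add: F_def)
    then show ?thesis using Y(2) by simp
  qed
  define S0 where "S0 = mat 1 - Y"
  have S0sq: "S0 ** S0 = c *\<^sub>R A"
  proof -
    have "S0 ** S0 = mat 1 - 2 *\<^sub>R Y + Y ** Y"
      by (simp add: S0_def matrix_diff_ldistrib matrix_diff_rdistrib scaleR_2)
    also have "\<dots> = mat 1 - M" using MY by (simp add: algebra_simps)
    also have "\<dots> = c *\<^sub>R A" by (simp add: M_def)
    finally show ?thesis .
  qed
  define S where "S = (1 / sqrt c) *\<^sub>R S0"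
  have hS0: "hermitian S0" using hY by (simp add: S0_def hermitian_def cadj_diff)
  have hS: "hermitian S" using hS0 by (simp add: S_def hermitian_def cadj_scaleR)
  have sq: "S ** S = A"
  proof -
    have "S ** S = ((1 / sqrt c) * (1 / sqrt c)) *\<^sub>R (S0 ** S0)"
      by (simp add: S_def matrix_scalar_ac scalar_matrix_assoc[symmetric])
    also have "\<dots> = A" using c by (simp add: S0sq)
    finally show ?thesis .
  qed
  have pS: "posdef S"
  proof (rule posdefI)
    fix x :: "complex^'n" assume x: "x \<noteq> 0"
    have "inner x (Y *v x) \<le> norm x * norm (Y *v x)" by (rule norm_cauchy_schwarz)
    also have "\<dots> \<le> norm x * (\<rho> * norm x)" by (intro mult_left_mono bY) auto
    finally have "inner x (S0 *v x) \<ge> (1 - \<rho>) * (norm x)^2"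
      by (simp add: S0_def matrix_vector_mult_diff_rdistrib inner_diff_right power2_norm_eq_inner[symmetric]
          power2_eq_square algebra_simps)
    moreover have "(1 - \<rho>) * (norm x)^2 > 0" using \<rho> x by simp
    ultimately have "inner x (S *v x) > 0" using c by (simp add: S_def scaleR_mv)
    then show "cdot x (S *v x) \<in> \<real> \<and> Re (cdot x (S *v x)) > 0"
      using hermitian_cdot_real[OF hS] by (simp add: inner_cdot)
  qed
  show ?thesis using hS pS sq by blast
qed



lemma psqrt_props:
  assumes "hermitian A" "posdef (A::complex^'n^'n)"
  shows "hermitian (psqrt A)" "posdef (psqrt A)" "psqrt A ** psqrt A = A"
proof -
  have ex: "\<exists>!S. hermitian S \<and> posdef S \<and> S ** S = A"
    using sqrt_exists[OF assms] psqrt_unique by metis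
  have "hermitian (psqrt A) \<and> posdef (psqrt A) \<and> psqrt A ** psqrt A = A"
    unfolding psqrt_def by (rule theI'[OF ex])
  then show "hermitian (psqrt A)" "posdef (psqrt A)" "psqrt A ** psqrt A = A" by auto
qed

lemma psqrt_sq:
  assumes "hermitian S" "posdef (S::complex^'n^'n)"
  shows "psqrt (S ** S) = S"
  unfolding psqrt_def
  by (rule the_equality) (use assms psqrt_unique in auto)

lemma rassoc: "(A::complex^'n^'m) ** B = C \<Longrightarrow> A ** (B ** X) = C ** X"
  by (metis matrix_mul_assoc)

lemma jj': "jmat ** (jmat ** X) = X"
  by (simp add: rassoc[OF jj])

lemma jRjR:
  assumes "R ** jmat ** R = jmat"
  shows "jmat ** (R ** (jmat ** R)) = mat 1"
  using assms jj by (metis matrix_mul_assoc)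

lemma jRjR':
  assumes "R ** jmat ** R = jmat"
  shows "jmat ** (R ** (jmat ** (R ** X))) = X"
  using jRjR[OF assms] by (metis matrix_mul_assoc matrix_mul_lid)

lemma RjR: "R ** jmat ** R = jmat \<Longrightarrow> R ** (jmat ** R) = jmat"
  by (simp add: matrix_mul_assoc)

lemma RjR': "R ** jmat ** R = jmat \<Longrightarrow> R ** (jmat ** (R ** X)) = jmat ** X"
  by (metis matrix_mul_assoc)

definition jU :: "'p::finite cmat \<Rightarrow> bool" where
  "jU U \<longleftrightarrow> cadj U ** jmat ** U = jmat \<and> U ** jmat ** cadj U = jmat"

lemma jU_one: "jU (mat 1)"
  by (simp add: jU_def)

lemma mat_left': "NO_MATCH (mat d) A \<Longrightarrow> (A::complex^'n^'m) ** (mat c ** B) = mat c ** (A ** B)"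
  by (rule mat_left)

lemma Gadj: "hermitian R \<Longrightarrow> cadj (mat \<i> ** jmat ** R) = mat (- \<i>) ** (R ** jmat)"
  unfolding hermitian_def
  by (simp add: cadj_mult mat_comm[of jmat] mat_left')

lemma GjG: assumes R: "R ** jmat ** R = jmat"
  shows "(mat \<i> ** jmat ** R) ** (jmat ** (mat (- \<i>) ** (R ** jmat))) = jmat"
  by (simp add: matrix_mul_assoc[symmetric] mat_left' mat_mat jRjR'[OF R])

lemma GjG2: assumes R: "R ** jmat ** R = jmat"
  shows "(mat (- \<i>) ** (R ** jmat)) ** (jmat ** (mat \<i> ** jmat ** R)) = jmat"
  by (simp add: matrix_mul_assoc[symmetric] mat_left' mat_mat jj' RjR[OF R])

lemma jU_step:
  assumes U: "jU U" and hR: "hermitian R" and R: "R ** jmat ** R = jmat"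
  shows "jU (U ** (mat \<i> ** jmat ** R))"
proof -
  define G where "G = mat \<i> ** jmat ** R"
  have a: "cadj U ** (jmat ** U) = jmat" "U ** (jmat ** cadj U) = jmat"
    using U by (auto simp: jU_def matrix_mul_assoc)
  have g: "G ** (jmat ** cadj G) = jmat" "cadj G ** (jmat ** G) = jmat"
    using GjG[OF R] GjG2[OF R] Gadj[OF hR] by (simp_all add: G_def)
  have 1: "cadj (U ** G) ** jmat ** (U ** G) = cadj G ** ((cadj U ** (jmat ** U)) ** G)"
    by (simp add: cadj_mult matrix_mul_assoc)
  have 2: "(U ** G) ** jmat ** cadj (U ** G) = U ** ((G ** (jmat ** cadj G)) ** cadj U)"
    by (simp add: cadj_mult matrix_mul_assoc)
  show ?thesis
    unfolding jU_def G_def[symmetric] 1 2 a g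
    using a g by (simp add: matrix_mul_assoc)
qed



lemma jU_inv:
  assumes "jU U"
  shows "matrix_inv U = jmat ** cadj U ** jmat" "matrix_inv (cadj U) = jmat ** U ** jmat"
    "U ** (jmat ** cadj U ** jmat) = mat 1" "cadj U ** (jmat ** U ** jmat) = mat 1"
proof -
  have a: "cadj U ** (jmat ** U) = jmat" "U ** (jmat ** cadj U) = jmat"
    using assms by (auto simp: jU_def matrix_mul_assoc)
  have l1: "(jmat ** cadj U ** jmat) ** U = mat 1"
    by (simp add: matrix_mul_assoc[symmetric] a jj)
  have l2: "(jmat ** U ** jmat) ** cadj U = mat 1"
    by (simp add: matrix_mul_assoc[symmetric] a jj)
  show "matrix_inv U = jmat ** cadj U ** jmat" "matrix_inv (cadj U) = jmat ** U ** jmat"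
    using minv_unique l1 l2 by blast+
  show "U ** (jmat ** cadj U ** jmat) = mat 1" "cadj U ** (jmat ** U ** jmat) = mat 1"
    using l1 l2 matrix_left_right_inverse by blast+
qed

lemma C_props:
  fixes U :: "'p::finite cmat"
  assumes U: "jU U" and hR: "hermitian R" and pR: "posdef R" and R: "R ** jmat ** R = jmat"
  defines "C \<equiv> matrix_inv (cadj U) ** (R ** R) ** matrix_inv U"
  shows "posdef C" "hermitian C" "C ** jmat ** C = jmat"
    "jmat ** (C ** (U ** X)) = U ** (jmat ** (R ** (R ** X)))"
proof -
  have a: "cadj U ** (jmat ** U) = jmat" "U ** (jmat ** cadj U) = jmat"
    using U by (auto simp: jU_def matrix_mul_assoc)
  have a': "cadj U ** (jmat ** (U ** Y)) = jmat ** Y" "U ** (jmat ** (cadj U ** Y)) = jmat ** Y" for Y :: "complex^'k^('p+'p)"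
    using U by (auto simp: jU_def matrix_mul_assoc)
  define V where "V = jmat ** cadj U ** jmat"
  have CV: "C = cadj V ** (R ** R) ** V"
    unfolding C_def V_def jU_inv[OF U] by (simp add: cadj_mult matrix_mul_assoc)
  have iV: "invertible V" using jU_inv(3)[OF U] invertible_left_inverse V_def by blast
  show "posdef C" unfolding CV by (rule posdef_congr[OF posdef_square(1)[OF hR pR] iV])
  show "hermitian C" unfolding CV by (rule hermitian_congr[OF posdef_square(2)[OF hR pR]])
  show "C ** jmat ** C = jmat"
    unfolding C_def jU_inv[OF U]
    by (simp add: matrix_mul_assoc[symmetric] a a' jj jj' RjR[OF R] RjR'[OF R] jRjR[OF R] jRjR'[OF R])
  show "jmat ** (C ** (U ** X)) = U ** (jmat ** (R ** (R ** X)))"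
    unfolding C_def jU_inv[OF U]
    by (simp add: matrix_mul_assoc[symmetric] a a' jj jj')
qed

lemma matrix_add_rdistrib: "((A::complex^'n^'m) + B) ** C = A ** C + B ** C"
  by (simp add: matrix_matrix_mult_def vec_eq_iff sum.distrib algebra_simps)

lemma key:
  fixes R :: "'p::finite cmat" and X :: "complex^'q^('p+'p)"
  assumes R: "R ** jmat ** R = jmat" and lam: "lam \<noteq> 0" "1 - \<i> * lam \<noteq> 0"
  defines "z \<equiv> (1 + \<i> * lam) / (1 - \<i> * lam)"
  shows "mat ((\<i> - 1/lam) * \<i>) ** (jmat ** (R ** (bdiag z 1 ** (R ** (bdiag z 1 ** X)))))
       = bdiag z 1 ** X + mat (- \<i> / lam) ** (jmat ** (R ** (R ** (bdiag z 1 ** X))))"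
proof -
  define a where "a = 1 - \<i> * lam"
  define \<mu> where "\<mu> = \<i> * lam"
  define E :: "'p cmat" where "E = mat 1 + mat \<mu> ** jmat"
  have Dz: "bdiag z 1 = mat (1/a) ** E"
  proof -
    have "mat (1/a) ** E = bdiag ((1/a) * (1 + \<mu>)) ((1/a) * (1 - \<mu>))"
      by (simp add: E_def mat_bdiag jmat_def bdiag_mult bdiag_add)
    also have "\<dots> = bdiag z 1" using lam by (simp add: a_def \<mu>_def z_def)
    finally show ?thesis by simp
  qed
  have EY: "E ** Y = Y + mat \<mu> ** (jmat ** Y)" for Y :: "complex^'q^('p+'p)"
    by (simp add: E_def matrix_add_rdistrib matrix_mul_assoc)
  have jRER: "jmat ** (R ** (E ** (R ** Y))) = jmat ** (R ** (R ** Y)) + mat \<mu> ** Y" for Y :: "complex^'q^('p+'p)"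
    by (simp add: EY matrix_add_ldistrib mat_left' jRjR'[OF R])
  define Q where "Q = E ** X"
  define T where "T = jmat ** (R ** (R ** Q))"
  have L: "mat ((\<i> - 1/lam) * \<i>) ** (jmat ** (R ** (bdiag z 1 ** (R ** (bdiag z 1 ** X)))))
      = mat ((\<i> - 1/lam) * \<i> * (1/a) * (1/a)) ** T + mat ((\<i> - 1/lam) * \<i> * (1/a) * (1/a) * \<mu>) ** Q"
  proof -
    have "jmat ** (R ** (bdiag z 1 ** (R ** (bdiag z 1 ** X)))) = mat ((1/a) * (1/a)) ** (jmat ** (R ** (E ** (R ** Q))))"
      by (simp add: Dz Q_def mat_left' mat_mat matrix_mul_assoc[symmetric])
    also have "\<dots> = mat ((1/a) * (1/a)) ** (T + mat \<mu> ** Q)"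
      by (simp add: jRER T_def)
    finally show ?thesis
      by (simp add: matrix_add_ldistrib mat_mat mult.assoc)
  qed
  have Rr: "bdiag z 1 ** X + mat (- \<i> / lam) ** (jmat ** (R ** (R ** (bdiag z 1 ** X))))
      = mat (1/a) ** Q + mat (- \<i> / lam * (1/a)) ** T"
    by (simp add: Dz Q_def T_def mat_left' mat_mat matrix_mul_assoc[symmetric])
  have a0: "a \<noteq> 0" using lam by (simp add: a_def)
  have k1: "(\<i> - 1/lam) * \<i> = -1 - \<i>/lam" by (simp add: algebra_simps)
  have k2: "- \<i>/lam * a = -1 - \<i>/lam" using lam(1) by (simp add: a_def algebra_simps)
  have k: "(\<i> - 1/lam) * \<i> = - \<i>/lam * a" using k1 k2 by simp
  have s1: "(\<i> - 1/lam) * \<i> * (1/a) * (1/a) = - \<i> / lam * (1/a)"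
    unfolding k using a0 by simp
  have s2: "(\<i> - 1/lam) * \<i> * (1/a) * (1/a) * \<mu> = 1/a"
    unfolding k \<mu>_def using a0 lam(1) by (simp add: field_simps)
  show ?thesis unfolding L Rr unfolding s2 unfolding s1 by (simp add: add.commute)
qed



lemma jU_invertible: "jU U \<Longrightarrow> invertible U"
  using jU_inv(3) invertible_right_inverse by blast

lemma sandwich:
  assumes "invertible (U::complex^'n^'n)"
  shows "cadj U ** (matrix_inv (cadj U) ** M ** matrix_inv U) ** U = M"
proof -
  have iU': "invertible (cadj U)" using invertible_cadj(1)[OF assms] .
  have "cadj U ** (matrix_inv (cadj U) ** M ** matrix_inv U) ** U
      = (cadj U ** matrix_inv (cadj U)) ** M ** (matrix_inv U ** U)"
    by (simp add: matrix_mul_assoc)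
  then show ?thesis by (simp add: minv_works[OF assms] minv_works[OF iU'])
qed

lemma sqrt_step:
  fixes U :: "'p::finite cmat"
  assumes U: "jU U" and pC: "posdef C" and hC: "hermitian C" and CjC: "C ** jmat ** C = jmat"
  defines "R \<equiv> psqrt (cadj U ** C ** U)"
  shows "jadm R" "R ** R = cadj U ** C ** U"
proof -
  define A where "A = cadj U ** C ** U"
  have iU: "invertible U" using jU_invertible[OF U] .
  have pA: "posdef A" unfolding A_def using posdef_congr[OF pC iU] .
  have hA: "hermitian A" unfolding A_def using hermitian_congr[OF hC] .
  have hR: "hermitian R" and pR: "posdef R" and RR: "R ** R = A"
    using psqrt_props[OF hA pA] by (auto simp: R_def A_def)
  have a: "cadj U ** (jmat ** U) = jmat" "U ** (jmat ** cadj U) = jmat"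
    using U by (auto simp: jU_def matrix_mul_assoc)
  have a': "cadj U ** (jmat ** (U ** Y)) = jmat ** Y" "U ** (jmat ** (cadj U ** Y)) = jmat ** Y" for Y :: "'p cmat"
    using U by (auto simp: jU_def matrix_mul_assoc)
  have c': "C ** (jmat ** (C ** Y)) = jmat ** Y" for Y :: "'p cmat"
    using CjC by (metis matrix_mul_assoc)
  have AjA: "A ** (jmat ** A) = jmat"
    unfolding A_def by (simp add: matrix_mul_assoc[symmetric] a a' c')
  \<comment> \<open>from R^2 j R^2 = j deduce R j R = j via uniqueness of square roots\<close>
  have iR: "invertible R" using posdef_invertible[OF pR] .
  define Ri where "Ri = matrix_inv R"
  have RRi: "R ** Ri = mat 1" "Ri ** R = mat 1" using minv_works[OF iR] by (auto simp: Ri_def)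
  have cRi: "cadj Ri = Ri"
    using invertible_cadj(2)[OF iR] hR by (simp add: Ri_def hermitian_def)
  have hRi: "hermitian Ri" using cRi by (simp add: hermitian_def)
  have iRi: "invertible Ri" using RRi(1) invertible_left_inverse by blast
  have "cadj Ri ** R ** Ri = Ri"
    using RRi cRi by (metis matrix_mul_assoc matrix_mul_lid)
  then have pRi: "posdef Ri" using posdef_congr[OF pR iRi] by simp
  define V where "V = jmat ** R ** jmat"
  have ij: "invertible (jmat :: 'p cmat)" using jj invertible_left_inverse by blast
  have pV: "posdef V" using posdef_congr[OF pR ij] by (simp add: V_def)
  have hV: "hermitian V" using hermitian_congr[OF hR, of jmat] by (simp add: V_def)
  have VVRR: "(V ** V) ** (R ** R) = mat 1"
  proof -
    have "(V ** V) ** (R ** R) = jmat ** ((R ** R) ** (jmat ** (R ** R)))"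
      by (simp add: V_def matrix_mul_assoc[symmetric] jj')
    also have "\<dots> = mat 1" using AjA by (simp add: RR jj)
    finally show ?thesis .
  qed
  have "V ** V = Ri ** Ri"
  proof -
    have "V ** V = (V ** V) ** ((R ** R) ** (Ri ** Ri))"
      using RRi by (simp add: matrix_mul_assoc[symmetric] rassoc[OF RRi(1)])
    also have "\<dots> = Ri ** Ri" using VVRR by (simp add: matrix_mul_assoc)
    finally show ?thesis .
  qed
  then have "V = Ri" using psqrt_unique[OF hV pV hRi pRi] by blast
  then have "R ** (jmat ** (R ** jmat)) = mat 1" using RRi by (simp add: V_def matrix_mul_assoc)
  then have "R ** (jmat ** (R ** (jmat ** jmat))) = jmat" by (metis matrix_mul_assoc matrix_mul_lid)
  then have "R ** jmat ** R = jmat" by (simp add: jj matrix_mul_assoc)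
  then show "jadm R" using hR pR by (simp add: jadm_def)
  show "R ** R = cadj U ** C ** U" using RR by (simp add: A_def)
qed



lemma part2:
  fixes C :: "nat \<Rightarrow> 'p::finite cmat"
  assumes C: "\<forall>k. posdef (C k) \<and> hermitian (C k) \<and> C k ** jmat ** C k = jmat"
  shows "\<forall>k. jadm (diracR C k) \<and>
            C k = matrix_inv (cadj (diracU C k)) ** (diracR C k ** diracR C k) ** matrix_inv (diracU C k)"
proof -
  have jUk: "jU (diracU C k)" for k
  proof (induction k)
    case 0 then show ?case by (simp add: jU_one)
  next
    case (Suc k)
    have "jadm (diracR C k)" using sqrt_step(1)[OF Suc] C by (simp add: diracR_def)
    then show ?case using jU_step[OF Suc] by (simp add: jadm_def diracR_def)
  qed
  show ?thesis
  proof
    fix k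
    have st: "jadm (diracR C k)" "diracR C k ** diracR C k = cadj (diracU C k) ** C k ** diracU C k"
      using sqrt_step[OF jUk[of k]] C by (simp_all add: diracR_def)
    have iU: "invertible (diracU C k)" using jU_invertible[OF jUk] .
    have iU': "invertible (cadj (diracU C k))" using invertible_cadj(1)[OF iU] .
    have "matrix_inv (cadj (diracU C k)) ** (diracR C k ** diracR C k) ** matrix_inv (diracU C k)
        = (matrix_inv (cadj (diracU C k)) ** cadj (diracU C k)) ** C k ** (diracU C k ** matrix_inv (diracU C k))"
      by (simp add: st(2) matrix_mul_assoc)
    also have "\<dots> = C k" by (simp add: minv_works[OF iU] minv_works[OF iU'])
    finally show "jadm (diracR C k) \<and>
            C k = matrix_inv (cadj (diracU C k)) ** (diracR C k ** diracR C k) ** matrix_inv (diracU C k)"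
      using st(1) by simp
  qed
qed

lemma szegoU_jU:
  assumes "\<forall>k. jadm (R k)"
  shows "jU (szegoU R k)"
proof (induction k)
  case 0 then show ?case by (simp add: jU_one)
next
  case (Suc k)
  then show ?case using jU_step[OF Suc] assms by (simp add: jadm_def)
qed

lemma part3:
  fixes R :: "nat \<Rightarrow> 'p::finite cmat"
  assumes adm: "\<forall>k. jadm (R k)"
  shows "let C = (\<lambda>k. matrix_inv (cadj (szegoU R k)) ** (R k ** R k) ** matrix_inv (szegoU R k))
        in \<forall>k. diracR C k = R k \<and> diracU C k = szegoU R k"
proof -
  define C where "C = (\<lambda>k. matrix_inv (cadj (szegoU R k)) ** (R k ** R k) ** matrix_inv (szegoU R k))"
  have eqR: "psqrt (cadj (szegoU R k) ** C k ** szegoU R k) = R k" for k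
  proof -
    have iU: "invertible (szegoU R k)" using jU_invertible[OF szegoU_jU[OF adm]] .
    have "cadj (szegoU R k) ** C k ** szegoU R k = R k ** R k"
      unfolding C_def using sandwich[OF iU] by simp
    moreover have "hermitian (R k)" "posdef (R k)" using adm by (auto simp: jadm_def)
    ultimately show ?thesis using psqrt_sq by simp
  qed
  have U: "diracU C k = szegoU R k" for k
  proof (induction k)
    case 0 then show ?case by simp
  next
    case (Suc k) then show ?case by (simp add: eqR)
  qed
  have "\<forall>k. diracR C k = R k \<and> diracU C k = szegoU R k"
    using U eqR by (simp add: diracR_def)
  then show ?thesis unfolding C_def Let_def by simp
qed



lemma mat_cong: "a = b \<Longrightarrow> mat a ** (W::complex^'n^'m) = mat b ** W"
  by simp

lemma dirac_step:
  fixes U R :: "'p::finite cmat" and Xk :: "complex^'q^('p+'p)"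
  assumes U: "jU U" and hR: "hermitian R" and pR: "posdef R" and R: "R ** jmat ** R = jmat"
    and th: "th \<noteq> 0" and lam: "lam \<noteq> 0" "1 - \<i> * lam \<noteq> 0"
  defines "z \<equiv> (1 + \<i> * lam) / (1 - \<i> * lam)"
  shows "mat (cf * (\<i> - 1/lam) / th) ** (U ** (mat \<i> ** jmat ** R)) ** bdiag z 1 **
            (mat th ** R ** bdiag z 1 ** Xk)
         - mat cf ** U ** bdiag z 1 ** Xk
       = mat (- \<i> / lam) ** jmat ** (matrix_inv (cadj U) ** (R ** R) ** matrix_inv U) **
            (mat cf ** U ** bdiag z 1 ** Xk)"
proof -
  define D :: "'p cmat" where "D = bdiag z 1"
  define T0 where "T0 = U ** (D ** Xk)"
  define T1 where "T1 = U ** (jmat ** (R ** (R ** (D ** Xk))))"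
  have e1: "mat (cf * (\<i> - 1/lam) / th) ** (U ** (mat \<i> ** jmat ** R)) ** D ** (mat th ** R ** D ** Xk)
      = mat cf ** (U ** (mat ((\<i> - 1/lam) * \<i>) ** (jmat ** (R ** (D ** (R ** (D ** Xk)))))))"
  proof -
    have "mat (cf * (\<i> - 1/lam) / th) ** (U ** (mat \<i> ** jmat ** R)) ** D ** (mat th ** R ** D ** Xk)
       = mat (cf * (\<i> - 1/lam) / th * (\<i> * th)) ** (U ** (jmat ** (R ** (D ** (R ** (D ** Xk))))))"
      by (simp add: matrix_mul_assoc[symmetric] mat_left' mat_mat mult.assoc)
    also have "\<dots> = mat (cf * ((\<i> - 1/lam) * \<i>)) ** (U ** (jmat ** (R ** (D ** (R ** (D ** Xk))))))"
      using th by (intro mat_cong) (simp add: field_simps)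
    also have "\<dots> = mat cf ** (U ** (mat ((\<i> - 1/lam) * \<i>) ** (jmat ** (R ** (D ** (R ** (D ** Xk)))))))"
      by (simp add: mat_left' mat_mat)
    finally show ?thesis .
  qed
  also have "\<dots> = mat cf ** (U ** (D ** Xk + mat (- \<i> / lam) ** (jmat ** (R ** (R ** (D ** Xk))))))"
    using key[OF R lam, of Xk] by (simp add: D_def z_def)
  also have "\<dots> = mat cf ** T0 + mat (cf * (- \<i> / lam)) ** T1"
    by (simp add: T0_def T1_def matrix_add_ldistrib mat_left' mat_mat)
  finally have L: "mat (cf * (\<i> - 1/lam) / th) ** (U ** (mat \<i> ** jmat ** R)) ** D ** (mat th ** R ** D ** Xk)
      - mat cf ** U ** D ** Xk = mat (cf * (- \<i> / lam)) ** T1"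
    by (simp add: T0_def matrix_mul_assoc)
  have Rr: "mat (- \<i> / lam) ** jmat ** (matrix_inv (cadj U) ** (R ** R) ** matrix_inv U) **
            (mat cf ** U ** D ** Xk) = mat (- \<i> / lam * cf) ** (jmat ** ((matrix_inv (cadj U) ** (R ** R) ** matrix_inv U) ** (U ** (D ** Xk))))"
    by (simp add: matrix_mul_assoc[symmetric] mat_left' mat_mat)
  also have "\<dots> = mat (cf * (- \<i> / lam)) ** T1"
    using C_props(4)[OF U hR pR R, of "D ** Xk"] by (simp add: T1_def mult.commute)
  finally show ?thesis using L by (simp add: D_def)
qed



lemma part1:
  fixes \<theta> :: "'p::finite cmat \<Rightarrow> complex" and R :: "nat \<Rightarrow> 'p cmat"
  assumes theta_nz: "\<And>R. jadm R \<Longrightarrow> \<theta> R \<noteq> 0" and adm: "\<forall>k. jadm (R k)"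
  shows "(let U = szegoU R;
            C = (\<lambda>k. matrix_inv (cadj (U k)) ** (R k ** R k) ** matrix_inv (U k))
        in (\<forall>k. posdef (C k) \<and> hermitian (C k) \<and> C k ** jmat ** C k = jmat) \<and>
           (\<forall>X :: nat \<Rightarrow> complex \<Rightarrow> complex ^ 'q ^ ('p + 'p).
              (\<forall>k z. X (Suc k) z = mat (\<theta> (R k)) ** R k ** bdiag z 1 ** X k z) \<longrightarrow>
              (let W = (\<lambda>k lam. let z = (1 + \<i> * lam) / (1 - \<i> * lam) in
                          mat ((\<i> - 1 / lam) ^ k / (\<Prod>r<k. \<theta> (R r))) ** U k ** bdiag z 1 ** X k z)
               in \<forall>k lam. lam \<noteq> 0 \<longrightarrow> 1 - \<i> * lam \<noteq> 0 \<longrightarrow>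
                    W (Suc k) lam - W k lam = mat (- \<i> / lam) ** jmat ** C k ** W k lam)))"
proof -
  have jUk: "jU (szegoU R k)" for k using szegoU_jU[OF adm] .
  have Rk: "hermitian (R k)" "posdef (R k)" "R k ** jmat ** R k = jmat" for k
    using adm by (auto simp: jadm_def)
  have th: "\<theta> (R k) \<noteq> 0" for k using theta_nz adm by blast
  show ?thesis
    unfolding Let_def
    apply (rule conjI)
    subgoal using C_props[OF jUk Rk] by blast
    apply (intro allI impI)
    subgoal premises prems for X k lam
    proof -
      define z where "z = (1 + \<i> * lam) / (1 - \<i> * lam)"
      define cf where "cf = (\<i> - 1 / lam) ^ k / (\<Prod>r<k. \<theta> (R r))"
      have sc: "(\<i> - 1 / lam) ^ Suc k / (\<Prod>r<Suc k. \<theta> (R r)) = cf * (\<i> - 1/lam) / \<theta> (R k)"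
        by (simp add: cf_def field_simps)
      have rec: "X (Suc k) z = mat (\<theta> (R k)) ** R k ** bdiag z 1 ** X k z"
        using prems(1) by blast
      have step: "mat (cf * (\<i> - 1/lam) / \<theta> (R k)) ** (szegoU R k ** (mat \<i> ** jmat ** R k)) ** bdiag z 1 **
            (mat (\<theta> (R k)) ** R k ** bdiag z 1 ** X k z)
         - mat cf ** szegoU R k ** bdiag z 1 ** X k z
       = mat (- \<i> / lam) ** jmat ** (matrix_inv (cadj (szegoU R k)) ** (R k ** R k) ** matrix_inv (szegoU R k)) **
            (mat cf ** szegoU R k ** bdiag z 1 ** X k z)"
        using dirac_step[OF jUk Rk th prems(2,3), where cf = cf and Xk = "X k z"] by (simp add: z_def)
      show ?thesis
        unfolding z_def[symmetric] cf_def[symmetric] szegoU.simps(2) sc rec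
        by (rule step)
    qed
    done
qed



theorem proposition2p1:
  fixes \<theta> :: "'p::finite cmat \<Rightarrow> complex"
  assumes theta_nz: "\<And>R. jadm R \<Longrightarrow> \<theta> R \<noteq> 0"
  shows
    \<comment> \<open>(i)\<close>
    "(\<forall>R :: nat \<Rightarrow> 'p cmat. (\<forall>k. jadm (R k)) \<longrightarrow>
       (let U = szegoU R;
            C = (\<lambda>k. matrix_inv (cadj (U k)) ** (R k ** R k) ** matrix_inv (U k))
        in (\<forall>k. posdef (C k) \<and> hermitian (C k) \<and> C k ** jmat ** C k = jmat) \<and>
           (\<forall>X :: nat \<Rightarrow> complex \<Rightarrow> complex ^ 'q ^ ('p + 'p).
              (\<forall>k z. X (Suc k) z = mat (\<theta> (R k)) ** R k ** bdiag z 1 ** X k z) \<longrightarrow>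
              (let W = (\<lambda>k lam. let z = (1 + \<i> * lam) / (1 - \<i> * lam) in
                          mat ((\<i> - 1 / lam) ^ k / (\<Prod>r<k. \<theta> (R r))) ** U k ** bdiag z 1 ** X k z)
               in \<forall>k lam. lam \<noteq> 0 \<longrightarrow> 1 - \<i> * lam \<noteq> 0 \<longrightarrow>
                    W (Suc k) lam - W k lam = mat (- \<i> / lam) ** jmat ** C k ** W k lam))))
     \<and>
     \<comment> \<open>(ii)\<close>
     (\<forall>C :: nat \<Rightarrow> 'p cmat. (\<forall>k. posdef (C k) \<and> hermitian (C k) \<and> C k ** jmat ** C k = jmat) \<longrightarrow>
       (\<forall>k. jadm (diracR C k) \<and>
            C k = matrix_inv (cadj (diracU C k)) ** (diracR C k ** diracR C k) ** matrix_inv (diracU C k)))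
     \<and>
     \<comment> \<open>mutual inverseness: (ii) applied to the C_k of (i) recovers R_k and U_k\<close>
     (\<forall>R :: nat \<Rightarrow> 'p cmat. (\<forall>k. jadm (R k)) \<longrightarrow>
       (let C = (\<lambda>k. matrix_inv (cadj (szegoU R k)) ** (R k ** R k) ** matrix_inv (szegoU R k))
        in \<forall>k. diracR C k = R k \<and> diracU C k = szegoU R k))"
    apply (rule conjI)
   apply (rule allI, rule impI)
   subgoal premises p for R
     using part1[OF theta_nz p] apply -
     apply assumption
     done
  apply (rule conjI)
   apply (rule allI, rule impI)
   apply (erule part2)
  apply (rule allI, rule impI)
  apply (erule part3)
  done


end
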